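(* For every $n\ge 2$, the set $\mathsf{BIAS}_n$ has exactly $(n-1)!$ elements.
   Context: An affine permutation of size $n$ is a bijection $w:\mathbb{Z}\to\mathbb{Z}$ with $w(i+n)=w(i)+n$ for all $i$ and $w(1)+\cdots+w(n)=\binom{n+1}{2}$; equivalently it is determined by its base window $[w_1,\dots,w_n]=[w(1),\dots,w(n)]$, and a sequence of integers is a base window iff its entries have distinct residues mod $n$ and sum to $\binom{n+1}{2}$. $\widetilde{S}_n^\circ$ denotes the set of such $w$ with $w_1<\cdots<w_n$. $\mathsf{BIAS}_n$ (the minimal abaci) is the set of $w\in\widetilde{S}_n^\circ$ with $w_{i+1}-w_i\in\{1,\dots,n-1\}$ for all $1\le i\le n-1$. *)

theory Defs
  imports Main
begin

text \<open>An affine permutation of size n is identified with its base window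
  [w(1),...,w(n)], represented as an integer list of length n.\<close>

definition is_base_window :: "nat \<Rightarrow> int list \<Rightarrow> bool" where
  "is_base_window n w \<longleftrightarrow>
     length w = n \<and>
     (\<forall>i<n. \<forall>j<n. i \<noteq> j \<longrightarrow> w ! i mod int n \<noteq> w ! j mod int n) \<and>
     sum_list w = int ((n + 1) choose 2)"

definition sorted_affine :: "nat \<Rightarrow> int list set" where
  "sorted_affine n = {w. is_base_window n w \<and> (\<forall>i. i + 1 < n \<longrightarrow> w ! i < w ! (i + 1))}"

definition BIAS :: "nat \<Rightarrow> int list set" where
  "BIAS n = {w \<in> sorted_affine n.
     \<forall>i. i + 1 < n \<longrightarrow> 1 \<le> w ! (i + 1) - w ! i \<and> w ! (i + 1) - w ! i \<le> int n - 1}"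

end

theory Submission
  imports Defs "HOL-Combinatorics.Multiset_Permutations"
begin

definition dd :: "nat \<Rightarrow> int list \<Rightarrow> nat \<Rightarrow> int" where
  "dd n r i = (r!(i+1) - r!i) mod int n"
definition DD :: "nat \<Rightarrow> int list \<Rightarrow> nat \<Rightarrow> int" where
  "DD n r i = (\<Sum>j<i. dd n r j)"
definition cc :: "nat \<Rightarrow> int list \<Rightarrow> int" where
  "cc n r = (int ((n+1) choose 2) - (\<Sum>i<n. DD n r i)) div int n"
definition hh :: "nat \<Rightarrow> int list \<Rightarrow> int list" where
  "hh n r = map (\<lambda>i. cc n r + DD n r i) [0..<n]"
definition gg :: "nat \<Rightarrow> int list \<Rightarrow> int list" where
  "gg n w = map (\<lambda>x. (x - w!0) mod int n) w"

lemma DD_Suc: "DD n r (Suc i) = DD n r i + dd n r i"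
  by (simp add: DD_def)

lemma DD_0: "DD n r 0 = 0"
  by (simp add: DD_def)

lemma choose2_int: "2 * int ((n+1) choose 2) = int n * (int n + 1)"
proof -
  have "(n+1) choose 2 = (n+1)*n div 2" by (simp add: choose_two)
  moreover have "even ((n+1)*n)" by simp
  ultimately have "2 * ((n+1) choose 2) = (n+1)*n" by simp
  then have "int (2 * ((n+1) choose 2)) = int ((n+1)*n)" by simp
  then show ?thesis by (simp add: algebra_simps)
qed

lemma sum_range_int: "2 * (\<Sum>{0..<int n}) = int n * (int n - 1)"
proof (induction n)
  case 0 then show ?case by simp
next
  case (Suc n)
  have "{0..<int (Suc n)} = insert (int n) {0..<int n}" by auto
  then have "\<Sum>{0..<int (Suc n)} = int n + \<Sum>{0..<int n}" by simp
  then show ?case using Suc by (simp add: algebra_simps)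
qed

lemma mod_sub_eq0:
  fixes a b N :: int
  assumes "0 \<le> a" "a < N" "0 \<le> b" "b < N" "(a - b) mod N = 0"
  shows "a = b"
proof -
  have "a mod N = b mod N" using assms(5) by (simp add: mod_eq_dvd_iff dvd_eq_mod_eq_0)
  then show ?thesis using assms by simp
qed

lemma hg:
  assumes w: "w \<in> BIAS n" and n: "n \<ge> 1"
  shows "hh n (gg n w) = w"
proof -
  have len: "length w = n" and sm: "sum_list w = int ((n + 1) choose 2)"
    and gap: "\<And>i. i + 1 < n \<Longrightarrow> 1 \<le> w ! (i + 1) - w ! i \<and> w ! (i + 1) - w ! i \<le> int n - 1"
    using w by (auto simp: BIAS_def sorted_affine_def is_base_window_def)
  have d: "dd n (gg n w) i = w!(i+1) - w!i" if "i + 1 < n" for i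
  proof -
    have "dd n (gg n w) i = ((w!(i+1) - w!0) mod int n - (w!i - w!0) mod int n) mod int n"
      using that len by (simp add: dd_def gg_def)
    also have "\<dots> = ((w!(i+1) - w!0) - (w!i - w!0)) mod int n"
      by (simp add: mod_diff_eq)
    also have "\<dots> = w!(i+1) - w!i" using gap[OF that] by simp
    finally show ?thesis .
  qed
  have D: "i < n \<Longrightarrow> DD n (gg n w) i = w!i - w!0" for i
  proof (induction i)
    case 0 then show ?case by (simp add: DD_0)
  next
    case (Suc i)
    then show ?case using d[of i] by (simp add: DD_Suc)
  qed
  have S: "(\<Sum>i<n. DD n (gg n w) i) = sum_list w - int n * w!0"
  proof -
    have "(\<Sum>i<n. DD n (gg n w) i) = (\<Sum>i<n. w!i - w!0)" using D by simp
    also have "\<dots> = (\<Sum>i<n. w!i) - int n * w!0" by (simp add: sum_subtractf)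
    also have "(\<Sum>i<n. w!i) = sum_list w" using len
      by (simp add: sum_list_sum_nth atLeast0LessThan)
    finally show ?thesis .
  qed
  have c: "cc n (gg n w) = w!0"
    using n by (simp add: cc_def S sm)
  show ?thesis
    by (rule nth_equalityI) (auto simp: hh_def len c D)
qed


lemma DD_mod:
  assumes r0: "r!0 = 0" and rng: "\<And>i. i < n \<Longrightarrow> 0 \<le> r!i \<and> r!i < int n"
  shows "i < n \<Longrightarrow> DD n r i mod int n = r!i"
proof (induction i)
  case 0 then show ?case using r0 by (simp add: DD_0)
next
  case (Suc i)
  have "DD n r (Suc i) mod int n = (DD n r i mod int n + dd n r i) mod int n"
    by (simp add: DD_Suc mod_add_left_eq)
  also have "\<dots> = (r!i + (r!(i+1) - r!i)) mod int n"
    using Suc by (simp add: dd_def mod_add_right_eq)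
  also have "\<dots> = r!(Suc i)" using rng[OF Suc.prems] by simp
  finally show ?case .
qed

lemma perm_facts:
  assumes p: "p \<in> permutations_of_set {1..<int n}" and n: "n \<ge> 1"
  shows "length (0#p) = n" "distinct (0#p)" "set (0#p) = {0..<int n}"
    "\<And>i. i < n \<Longrightarrow> 0 \<le> (0#p)!i \<and> (0#p)!i < int n"
proof -
  have sp: "set p = {1..<int n}" and dp: "distinct p" using p by (auto simp: permutations_of_set_def)
  show d: "distinct (0#p)" using sp dp by auto
  show st: "set (0#p) = {0..<int n}" using sp n by auto
  have "length (0#p) = card (set (0#p))" using d by (simp add: distinct_card)
  then show l: "length (0#p) = n" using st by simp
  show "\<And>i. i < n \<Longrightarrow> 0 \<le> (0#p)!i \<and> (0#p)!i < int n"
  proof -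
    fix i assume "i < n"
    then have "(0#p)!i \<in> set (0#p)" using l by (metis nth_mem)
    then show "0 \<le> (0#p)!i \<and> (0#p)!i < int n" using st by auto
  qed
qed

lemma gh:
  assumes p: "p \<in> permutations_of_set {1..<int n}" and n: "n \<ge> 1"
  shows "gg n (hh n (0#p)) = 0#p"
proof -
  note pf = perm_facts[OF p n]
  have Dm: "i < n \<Longrightarrow> DD n (0#p) i mod int n = (0#p)!i" for i
    by (rule DD_mod) (use pf in auto)
  show ?thesis
  proof (rule nth_equalityI)
    show "length (gg n (hh n (0 # p))) = length (0 # p)" using pf by (simp add: gg_def hh_def)
  next
    fix i assume "i < length (gg n (hh n (0 # p)))"
    then have i: "i < n" by (simp add: gg_def hh_def)
    have "gg n (hh n (0 # p)) ! i = DD n (0#p) i mod int n"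
      using i n by (simp add: gg_def hh_def DD_0 del: upt_Suc)
    then show "gg n (hh n (0 # p)) ! i = (0 # p) ! i" using Dm[OF i] by simp
  qed
qed


lemma h_in:
  assumes p: "p \<in> permutations_of_set {1..<int n}" and n: "n \<ge> 2"
  shows "hh n (0#p) \<in> BIAS n"
proof -
  define r where "r = 0#p"
  have n1: "n \<ge> 1" using n by simp
  note pf = perm_facts[OF p n1, folded r_def]
  have Dm: "i < n \<Longrightarrow> DD n r i mod int n = r!i" for i
    by (rule DD_mod) (use pf in \<open>auto simp: r_def\<close>)
  define c where "c = cc n r"
  have hn: "i < n \<Longrightarrow> hh n r ! i = c + DD n r i" for i by (simp add: hh_def c_def)
  have len: "length (hh n r) = n" by (simp add: hh_def)
  have rdist: "i < n \<Longrightarrow> j < n \<Longrightarrow> r!i = r!j \<Longrightarrow> i = j" for i j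
    using pf by (metis nth_eq_iff_index_eq)
  have res: "\<forall>i<n. \<forall>j<n. i \<noteq> j \<longrightarrow> hh n r ! i mod int n \<noteq> hh n r ! j mod int n"
  proof (intro allI impI)
    fix i j assume ij: "i < n" "j < n" "i \<noteq> j"
    show "hh n r ! i mod int n \<noteq> hh n r ! j mod int n"
    proof
      assume "hh n r ! i mod int n = hh n r ! j mod int n"
      then have "(c + DD n r i) mod int n = (c + DD n r j) mod int n" using ij hn by simp
      then have "((c + DD n r i) - c) mod int n = ((c + DD n r j) - c) mod int n"
        by (metis mod_diff_left_eq)
      then have "r!i = r!j" using Dm ij by simp
      then show False using rdist ij by blast
    qed
  qed
  have sumr: "(\<Sum>i<n. r!i) = \<Sum>{0..<int n}"
  proof -
    have "(\<Sum>i<n. r!i) = sum_list r" using pf by (simp add: sum_list_sum_nth atLeast0LessThan)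
    also have "\<dots> = sum id (set r)" using pf sum_list_distinct_conv_sum_set[of r id] by simp
    finally show ?thesis using pf by simp
  qed
  define C where "C = int ((n+1) choose 2)"
  define S where "S = (\<Sum>i<n. DD n r i)"
  have CS: "C - \<Sum>{0..<int n} = int n"
    using choose2_int[of n] sum_range_int[of n] unfolding C_def by (simp add: algebra_simps)
  have "S mod int n = (\<Sum>i<n. DD n r i mod int n) mod int n" unfolding S_def by (simp add: mod_sum_eq)
  also have "\<dots> = (\<Sum>i<n. r!i) mod int n" using Dm by simp
  finally have "S mod int n = \<Sum>{0..<int n} mod int n" using sumr by simp
  then have "(C - S) mod int n = (C - \<Sum>{0..<int n}) mod int n" by (metis mod_diff_right_eq)
  then have "(C - S) mod int n = 0" using CS by simp
  then have cmul: "int n * c = C - S" unfolding c_def cc_def C_def S_def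
    by (metis dvd_eq_mod_eq_0 dvd_mult_div_cancel)
  have sm: "sum_list (hh n r) = C"
  proof -
    have "sum_list (hh n r) = (\<Sum>i<n. c + DD n r i)"
      by (simp add: sum_list_sum_nth len hn atLeast0LessThan)
    also have "\<dots> = int n * c + S" by (simp add: sum.distrib S_def)
    finally show ?thesis using cmul by simp
  qed
  have gap: "1 \<le> hh n r ! (i+1) - hh n r ! i \<and> hh n r ! (i+1) - hh n r ! i \<le> int n - 1"
    if i: "i + 1 < n" for i
  proof -
    have e: "hh n r ! (i+1) - hh n r ! i = (r!(i+1) - r!i) mod int n"
      using i hn[of i] hn[of "i+1"] by (simp add: DD_Suc dd_def)
    have nz: "(r!(i+1) - r!i) mod int n \<noteq> 0"
    proof
      assume "(r!(i+1) - r!i) mod int n = 0"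
      moreover have "0 \<le> r!i \<and> r!i < int n" using pf(4)[of i] i by simp
      moreover have "0 \<le> r!(i+1) \<and> r!(i+1) < int n" using pf(4)[of "i+1"] i by simp
      ultimately have "r!(i+1) = r!i" using mod_sub_eq0[of "r!(i+1)" "int n" "r!i"] by metis
      then show False using rdist[of "i+1" i] i by simp
    qed
    have "0 \<le> (r!(i+1) - r!i) mod int n" "(r!(i+1) - r!i) mod int n < int n" using n by simp_all
    then show ?thesis using e nz by simp
  qed
  have inc: "\<And>i. i + 1 < n \<Longrightarrow> hh n r ! i < hh n r ! (i+1)"
    using gap by fastforce
  show ?thesis
    using inc unfolding r_def[symmetric] BIAS_def sorted_affine_def is_base_window_def
    using len res sm gap by (auto simp: C_def)
qed


lemma g_perm:
  assumes w: "w \<in> BIAS n" and n: "n \<ge> 1"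
  shows "tl (gg n w) \<in> permutations_of_set {1..<int n}" "0 # tl (gg n w) = gg n w"
proof -
  have len: "length w = n"
    and res: "\<forall>i<n. \<forall>j<n. i \<noteq> j \<longrightarrow> w ! i mod int n \<noteq> w ! j mod int n"
    using w by (auto simp: BIAS_def sorted_affine_def is_base_window_def)
  define g where "g = gg n w"
  have lg: "length g = n" by (simp add: g_def gg_def len)
  have gn: "i < n \<Longrightarrow> g!i = (w!i - w!0) mod int n" for i by (simp add: g_def gg_def len)
  have g0: "g!0 = 0" using gn[of 0] n by simp
  have dg: "distinct g"
  proof (subst distinct_conv_nth, intro allI impI)
    fix i j assume ij: "i < length g" "j < length g" "i \<noteq> j"
    show "g!i \<noteq> g!j"
    proof
      assume "g!i = g!j"
      then have "(w!i - w!0) mod int n = (w!j - w!0) mod int n" using gn ij lg by simp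
      then have "((w!i - w!0) + w!0) mod int n = ((w!j - w!0) + w!0) mod int n"
        by (metis mod_add_left_eq)
      then have "w!i mod int n = w!j mod int n" by simp
      then show False using res ij lg by auto
    qed
  qed
  have sub: "set g \<subseteq> {0..<int n}"
  proof
    fix x assume "x \<in> set g"
    then obtain i where "i < n" "x = g!i" using lg by (metis in_set_conv_nth)
    then show "x \<in> {0..<int n}" using gn n by simp
  qed
  have "card (set g) = n" using dg lg by (simp add: distinct_card)
  then have sg: "set g = {0..<int n}" using sub by (intro card_subset_eq) auto
  have gc: "g = 0 # tl g" using g0 lg n by (cases g) auto
  then show "0 # tl (gg n w) = gg n w" unfolding g_def by simp
  have "distinct (0 # tl g)" using dg gc by metis
  moreover have "set (0 # tl g) = {0..<int n}" using sg gc by metis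
  ultimately have A: "set (tl g) = {0..<int n} - {0}" "distinct (tl g)" by auto
  have "{0..<int n} - {0} = {1..<int n}" by auto
  with A have "set (tl g) = {1..<int n}" "distinct (tl g)" by auto
  then show "tl (gg n w) \<in> permutations_of_set {1..<int n}"
    unfolding g_def by (simp add: permutations_of_set_def)
qed

theorem mainTheorem3:
  fixes n :: nat
  assumes "n \<ge> 2"
  shows "finite (BIAS n) \<and> card (BIAS n) = fact (n - 1)"
proof -
  have n1: "n \<ge> 1" using assms by simp
  define P where "P = permutations_of_set {1..<int n}"
  define H where "H = (\<lambda>p. hh n (0#p))"
  have eq: "BIAS n = H ` P"
  proof
    show "H ` P \<subseteq> BIAS n" using h_in assms unfolding H_def P_def by blast
  next
    show "BIAS n \<subseteq> H ` P"
    proof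
      fix w assume w: "w \<in> BIAS n"
      have "H (tl (gg n w)) = w" unfolding H_def using g_perm(2)[OF w n1] hg[OF w n1] by simp
      then show "w \<in> H ` P" using g_perm(1)[OF w n1] unfolding P_def by (metis image_eqI)
    qed
  qed
  have inj: "inj_on H P"
  proof
    fix p q assume "p \<in> P" "q \<in> P" "H p = H q"
    then have "gg n (hh n (0#p)) = gg n (hh n (0#q))" unfolding H_def by simp
    then have "0#p = 0#q" using gh n1 \<open>p \<in> P\<close> \<open>q \<in> P\<close> unfolding P_def by metis
    then show "p = q" by simp
  qed
  have "card (BIAS n) = card P" using eq inj by (simp add: card_image)
  also have "\<dots> = fact (nat (int n - 1))" unfolding P_def by simp
  also have "nat (int n - 1) = n - 1" using n1 by linarith
  finally have "card (BIAS n) = fact (n - 1)" .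
  then show ?thesis using eq unfolding P_def by simp
qed

end
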